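(* Let $U\subset\mathbb{R}^{n\times n}$ be a compact set of matrices. Then every matrix $A\in U$ is stable if and only if there exists an $n\times n$ SOS matrix $P:\mathbb{R}^{n\times n}\to\mathbb{S}^{n\times n}$ such that $P(A)\succ0$ for all $A\in U$ and $P(A)-A^TP(A)A\succ0$ for all $A\in U$.
   Context: A matrix is stable if its spectral radius (maximum modulus of its eigenvalues) is less than one. A polynomial matrix $P$ (symmetric matrix with polynomial entries in the $n^2$ entries of $A$) is an SOS matrix if the scalar polynomial $y^TP(A)y$ in the variables $(A,y)$ is a sum of squares of polynomials. $\succ0$ denotes positive definiteness. *)

theory Defs
  imports "HOL-Analysis.Analysis"
begin

inductive_set poly_funs :: "('a \<Rightarrow> real) set \<Rightarrow> ('a \<Rightarrow> real) set"
  for C :: "('a \<Rightarrow> real) set" where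
  const: "(\<lambda>_. c) \<in> poly_funs C"
| coord: "f \<in> C \<Longrightarrow> f \<in> poly_funs C"
| add: "f \<in> poly_funs C \<Longrightarrow> g \<in> poly_funs C \<Longrightarrow> (\<lambda>x. f x + g x) \<in> poly_funs C"
| mult: "f \<in> poly_funs C \<Longrightarrow> g \<in> poly_funs C \<Longrightarrow> (\<lambda>x. f x * g x) \<in> poly_funs C"

definition poly_in_A :: "(real^'n^'n \<Rightarrow> real) set" where
  "poly_in_A = poly_funs {(\<lambda>A. A $ i $ j) | i j. True}"

definition poly_in_Ay :: "((real^'n^'n) \<times> (real^'n) \<Rightarrow> real) set" where
  "poly_in_Ay = poly_funs ({(\<lambda>(A, y). A $ i $ j) | i j. True} \<union> {(\<lambda>(A, y). y $ i) | i. True})"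

definition is_sos :: "((real^'n^'n) \<times> (real^'n) \<Rightarrow> real) \<Rightarrow> bool" where
  "is_sos f \<longleftrightarrow> (\<exists>qs. (\<forall>q\<in>set qs. q \<in> poly_in_Ay) \<and>
                        (\<forall>z. f z = (\<Sum>q\<leftarrow>qs. (q z)^2)))"

definition sos_matrix :: "(real^'n^'n \<Rightarrow> real^'n^'n) \<Rightarrow> bool" where
  "sos_matrix P \<longleftrightarrow>
     (\<forall>i j. (\<lambda>A. P A $ i $ j) \<in> poly_in_A) \<and>
     (\<forall>A. transpose (P A) = P A) \<and>
     is_sos (\<lambda>(A, y). y \<bullet> (P A *v y))"

definition pos_def :: "real^'n^'n \<Rightarrow> bool" where
  "pos_def M \<longleftrightarrow> transpose M = M \<and> (\<forall>x. x \<noteq> 0 \<longrightarrow> x \<bullet> (M *v x) > 0)"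

definition cmat :: "real^'n^'n \<Rightarrow> complex^'n^'n" where
  "cmat A = (\<chi> i j. complex_of_real (A $ i $ j))"

definition c_eigenvalue :: "real^'n^'n \<Rightarrow> complex \<Rightarrow> bool" where
  "c_eigenvalue A l \<longleftrightarrow> (\<exists>v. v \<noteq> 0 \<and> cmat A *v v = l *s v)"

definition spec_rad :: "real^'n^'n \<Rightarrow> real" where
  "spec_rad A = Max {cmod l | l. c_eigenvalue A l}"

definition stable :: "real^'n^'n \<Rightarrow> bool" where
  "stable A \<longleftrightarrow> spec_rad A < 1"

end

theory Submission
  imports Defs "Jordan_Normal_Form.Spectral_Radius"
begin


no_notation Matrix.scalar_prod (infix \<open>\<bullet>\<close> 70)
no_notation Matrix.vec_index (infixl \<open>$\<close> 100)

fun mpow :: "real^'n^'n \<Rightarrow> nat \<Rightarrow> real^'n^'n" where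
  "mpow A 0 = Finite_Cartesian_Product.mat 1"
| "mpow A (Suc k) = mpow A k ** A"

lemma mpow_add: "mpow A (a + b) = mpow A a ** mpow A b"
  by (induction b) (auto simp: matrix_mul_assoc)

lemma poly_funs_sum:
  assumes "finite S" "\<And>s. s \<in> S \<Longrightarrow> f s \<in> poly_funs C"
  shows "(\<lambda>x. \<Sum>s\<in>S. f s x) \<in> poly_funs C"
  using assms
proof (induction S rule: finite_induct)
  case empty
  then show ?case using poly_funs.const[of 0 C] by simp
next
  case (insert a F)
  then show ?case using poly_funs.add[of "f a" C "\<lambda>x. \<Sum>s\<in>F. f s x"] by simp
qed

lemma mpow_poly: "(\<lambda>A. mpow A k $ i $ j) \<in> poly_in_A"
proof (induction k arbitrary: i j)
  case 0
  have "(\<lambda>A::real^'a^'a. Finite_Cartesian_Product.mat 1 $ i $ j) = (\<lambda>_. if i = j then 1 else 0)"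
    by (simp add: Finite_Cartesian_Product.mat_def)
  then show ?case unfolding poly_in_A_def using poly_funs.const by simp
next
  case (Suc k)
  have c: "(\<lambda>A::real^'a^'a. A $ l $ j) \<in> poly_in_A" for l
    unfolding poly_in_A_def by (rule poly_funs.coord) blast
  have "(\<lambda>A. \<Sum>l\<in>UNIV. mpow A k $ i $ l * A $ l $ j) \<in> poly_in_A"
    unfolding poly_in_A_def
    apply (rule poly_funs_sum, simp)
    apply (rule poly_funs.mult)
    using Suc c unfolding poly_in_A_def by auto
  then show ?case by (simp add: matrix_matrix_mult_def)
qed

lemma poly_cont:
  assumes "f \<in> poly_funs C" "\<And>g. g \<in> C \<Longrightarrow> continuous_on UNIV g"
  shows "continuous_on UNIV f"
  using assms by (induction rule: poly_funs.induct) (auto intro!: continuous_intros)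

lemma poly_A_cont: "f \<in> poly_in_A \<Longrightarrow> continuous_on UNIV f"
  unfolding poly_in_A_def
  by (erule poly_cont) (auto intro!: continuous_intros)

lemma poly_A_Ay: "f \<in> poly_in_A \<Longrightarrow> (\<lambda>z. f (fst z)) \<in> poly_in_Ay"
  unfolding poly_in_A_def poly_in_Ay_def
proof (induction rule: poly_funs.induct)
  case (const c)
  then show ?case by (rule poly_funs.const)
next
  case (coord f)
  then obtain i j where f: "f = (\<lambda>A. A $ i $ j)" by blast
  have "(\<lambda>z. f (fst z)) = (\<lambda>(A, y). A $ i $ j)" by (auto simp: f)
  then show ?case by (auto intro!: poly_funs.coord)
next
  case (add f g)
  then show ?case using poly_funs.add by fastforce
next
  case (mult f g)
  then show ?case using poly_funs.mult by fastforce
qed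

lemma inner_vmul[simp]: "inner x (y v* B) = inner (B *v x) (y::real^'n)"
  by (metis dot_lmul_matrix inner_commute)

lemma sum_mat_vec: "finite S \<Longrightarrow> (\<Sum>k\<in>S. M k) *v (x::real^'n) = (\<Sum>k\<in>S. M k *v x)"
  by (induction S rule: finite_induct) (auto simp: algebra_simps)

lemma transpose_sum: "finite S \<Longrightarrow> transpose (\<Sum>k\<in>S. M k) = (\<Sum>k\<in>S. transpose (M k :: real^'n^'n))"
  by (simp add: transpose_def Finite_Cartesian_Product.vec_eq_iff sum_component)

lemma transpose_diff: "transpose (X - Y) = transpose X - transpose (Y::real^'n^'n)"
  by (auto simp: transpose_def Finite_Cartesian_Product.vec_eq_iff)

definition PN :: "nat \<Rightarrow> real^'n^'n \<Rightarrow> real^'n^'n" where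
  "PN N A = (\<Sum>k<N. transpose (mpow A k) ** mpow A k)"

lemma PN_quad: "inner x (PN N A *v x) = (\<Sum>k<N. (norm (mpow A k *v x))^2)"
  unfolding PN_def
  by (simp add: sum_mat_vec inner_sum_right matrix_vector_mul_assoc[symmetric]
       power2_norm_eq_inner)

lemma PN_sym: "transpose (PN N A) = PN N A"
  unfolding PN_def by (simp add: transpose_sum matrix_transpose_mul)

lemma PN_lyap: "inner x ((PN N A - transpose A ** PN N A ** A) *v x)
    = (norm x)^2 - (norm (mpow A N *v x))^2"
proof -
  have "inner x ((transpose A ** PN N A ** A) *v x) = inner (A *v x) (PN N A *v (A *v x))"
    by (simp add: matrix_vector_mul_assoc[symmetric] )
  also have "\<dots> = (\<Sum>k<N. (norm (mpow A (Suc k) *v x))^2)"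
    by (simp only: PN_quad[of "A *v x"]) (simp only: matrix_vector_mul_assoc mpow.simps)
  finally have "inner x ((PN N A - transpose A ** PN N A ** A) *v x)
     = (\<Sum>k<N. (norm (mpow A k *v x))^2) - (\<Sum>k<N. (norm (mpow A (Suc k) *v x))^2)"
    by (simp add: matrix_vector_mult_diff_rdistrib inner_diff_right PN_quad)
  also have "\<dots> = (norm x)^2 - (norm (mpow A N *v x))^2"
    using sum_lessThan_telescope[of "\<lambda>k. (norm (mpow A k *v x))^2" N]
    by (simp add: sum_subtractf)
  finally show ?thesis .
qed



lemma PN_entry_poly: "(\<lambda>A. PN N A $ i $ j) \<in> poly_in_A"
proof -
  have e: "PN N A $ i $ j = (\<Sum>k\<in>{..<N}. \<Sum>l\<in>UNIV. mpow A k $ l $ i * mpow A k $ l $ j)" for A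
    by (simp add: PN_def sum_component matrix_matrix_mult_def transpose_def)
  show ?thesis unfolding e poly_in_A_def
    by (intro poly_funs_sum poly_funs.mult mpow_poly[unfolded poly_in_A_def]) auto
qed

lemma norm_sq_vec: "(norm (v::real^'n))^2 = (\<Sum>i\<in>UNIV. (v $ i)^2)"
proof -
  have "(norm v)^2 = inner v v" by (rule power2_norm_eq_inner)
  then show ?thesis by (simp add: inner_vec_def power2_eq_square)
qed

lemma PN_sos: "sos_matrix (PN N :: real^'n^'n \<Rightarrow> real^'n^'n)"
proof -
  obtain xs :: "'n list" where xs: "set xs = UNIV" "distinct xs"
    using finite_distinct_list[of "UNIV :: 'n set"] by auto
  define qs where "qs = map (\<lambda>(k,i) z. (mpow (fst z) k *v snd z) $ i) (List.product [0..<N] xs)"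
  have yc: "(\<lambda>z. snd z $ j) \<in> poly_in_Ay" for j :: 'n
  proof -
    have "(\<lambda>z::(real^'n^'n) \<times> (real^'n). snd z $ j) = (\<lambda>(A, y). y $ j)" by auto
    then show ?thesis unfolding poly_in_Ay_def by (auto intro!: poly_funs.coord)
  qed
  have qpoly: "q \<in> poly_in_Ay" if "q \<in> set qs" for q
  proof -
    from that obtain k i where q: "q = (\<lambda>z. (mpow (fst z) k *v snd z) $ i)"
      unfolding qs_def by auto
    have "q = (\<lambda>z. \<Sum>j\<in>UNIV. mpow (fst z) k $ i $ j * snd z $ j)"
      unfolding q by (simp add: matrix_vector_mult_def)
    also have "\<dots> \<in> poly_in_Ay"
      unfolding poly_in_Ay_def
      apply (rule poly_funs_sum, simp)
      apply (rule poly_funs.mult)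
      using poly_A_Ay[OF mpow_poly[of k i]] yc unfolding poly_in_Ay_def by auto
    finally show ?thesis .
  qed
  have val: "(\<lambda>(A, y). inner y (PN N A *v y)) z = (\<Sum>q\<leftarrow>qs. (q z)^2)" for z
  proof -
    obtain A y where z: "z = (A, y)" by force
    have "(\<Sum>q\<leftarrow>qs. (q z)^2) = (\<Sum>p\<leftarrow>List.product [0..<N] xs. ((mpow A (fst p) *v y) $ snd p)^2)"
      unfolding qs_def by (simp add: z case_prod_beta o_def)
    also have "\<dots> = (\<Sum>p\<in>{0..<N} \<times> UNIV. ((mpow A (fst p) *v y) $ snd p)^2)"
      using xs by (simp add: sum_list_distinct_conv_sum_set distinct_product)
    also have "\<dots> = (\<Sum>k\<in>{0..<N}. \<Sum>i\<in>UNIV. ((mpow A k *v y) $ i)^2)"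
      by (simp add: sum.cartesian_product case_prod_beta)
    also have "\<dots> = inner y (PN N A *v y)"
      by (simp add: PN_quad norm_sq_vec atLeast0LessThan)
    finally show ?thesis by (simp add: z)
  qed
  show ?thesis
    unfolding sos_matrix_def is_sos_def
    using PN_entry_poly PN_sym qpoly val by blast
qed



definition ssum :: "nat \<Rightarrow> real^'n^'n \<Rightarrow> real" where
  "ssum k A = (\<Sum>i\<in>UNIV. \<Sum>j\<in>UNIV. \<bar>mpow A k $ i $ j\<bar>)"

lemma ssum_cont: "continuous_on UNIV (ssum k)"
  unfolding ssum_def
  by (intro continuous_on_sum continuous_on_rabs poly_A_cont[OF mpow_poly])

lemma ssum_nonneg: "0 \<le> ssum k A"
  unfolding ssum_def by (intro sum_nonneg) auto

lemma ssum_bound: "norm (mpow A k *v y) \<le> ssum k A * norm y"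
proof -
  have "norm (mpow A k *v y) \<le> onorm ((*v) (mpow A k)) * norm y"
    by (rule onorm[OF matrix_vector_mul_bounded_linear])
  also have "\<dots> \<le> ssum k A * norm y"
    unfolding ssum_def by (intro mult_right_mono onorm_le_matrix_component_sum) auto
  finally show ?thesis .
qed

lemma ssum_pow_bound: "norm (mpow A (k*m) *v y) \<le> ssum k A ^ m * norm y"
proof (induction m arbitrary: y)
  case 0
  then show ?case by simp
next
  case (Suc m)
  have "mpow A (k * Suc m) *v y = mpow A (k*m) *v (mpow A k *v y)"
    by (simp add: mpow_add[symmetric] matrix_vector_mul_assoc add.commute)
  also have "norm \<dots> \<le> ssum k A ^ m * norm (mpow A k *v y)"
    by (rule Suc.IH)
  also have "\<dots> \<le> ssum k A ^ m * (ssum k A * norm y)"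
    by (intro mult_left_mono ssum_bound zero_le_power ssum_nonneg)
  finally show ?case by (simp add: mult_ac)
qed

lemma contraction:
  assumes "ssum k A < 1" "0 < m" "y \<noteq> 0"
  shows "norm (mpow A (k*m) *v y) < norm y"
proof -
  have "ssum k A ^ m < 1 ^ m"
    by (rule power_strict_mono[OF assms(1) ssum_nonneg assms(2)])
  then have "ssum k A ^ m * norm y < 1 * norm y"
    using assms(3) by (intro mult_strict_right_mono) auto
  then show ?thesis using ssum_pow_bound[of A k m y] by simp
qed

lemma forward_from_decay:
  fixes U :: "(real^'n^'n) set"
  assumes U: "compact U" and dec: "\<forall>A\<in>U. \<exists>k>0. ssum k A < 1"
  shows "\<exists>P :: real^'n^'n \<Rightarrow> real^'n^'n. sos_matrix P \<and>
              (\<forall>A\<in>U. pos_def (P A)) \<and>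
              (\<forall>A\<in>U. pos_def (P A - transpose A ** P A ** A))"
proof -
  from dec obtain K where K: "\<And>A. A \<in> U \<Longrightarrow> K A > 0 \<and> ssum (K A) A < 1"
    by metis
  have opn: "open {X. ssum (K A) X < 1}" for A
    by (rule open_Collect_less[OF ssum_cont continuous_on_const])
  have cov: "U \<subseteq> (\<Union>A\<in>U. {X. ssum (K A) X < 1})"
    using K by auto
  obtain D where D: "D \<subseteq> U" "finite D" "U \<subseteq> (\<Union>A\<in>D. {X. ssum (K A) X < 1})"
    by (rule compactE_image[OF U opn cov]) blast
  define N where "N = (\<Prod>A\<in>D. K A)"
  have Npos: "N > 0" unfolding N_def using D K by (auto intro: prod_pos)
  have contr: "norm (mpow A N *v y) < norm y" if "A \<in> U" "y \<noteq> 0" for A y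
  proof -
    from D that obtain A0 where A0: "A0 \<in> D" "ssum (K A0) A < 1" by blast
    have "K A0 dvd N" unfolding N_def using D A0 by auto
    then obtain m where m: "N = K A0 * m" by (auto elim: dvdE)
    with Npos have "m > 0" by (cases m) auto
    show ?thesis using contraction[OF A0(2) \<open>m > 0\<close> that(2)] m by simp
  qed
  have pd1: "pos_def (PN N A)" for A
  proof -
    have "0 < inner x (PN N A *v x)" if "x \<noteq> 0" for x
    proof -
      have "(norm (mpow A 0 *v x))^2 \<le> (\<Sum>k<N. (norm (mpow A k *v x))^2)"
        by (rule member_le_sum) (use Npos in auto)
      moreover have "0 < (norm x)^2" using that by simp
      ultimately show ?thesis unfolding PN_quad mpow.simps matrix_vector_mul_lid by linarith
    qed
    then show ?thesis unfolding pos_def_def using PN_sym by auto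
  qed
  have pd2: "pos_def (PN N A - transpose A ** PN N A ** A)" if "A \<in> U" for A
  proof -
    have "transpose (PN N A - transpose A ** PN N A ** A) = PN N A - transpose A ** PN N A ** A"
      by (simp add: transpose_diff matrix_transpose_mul PN_sym matrix_mul_assoc)
    moreover have "0 < inner x ((PN N A - transpose A ** PN N A ** A) *v x)" if "x \<noteq> 0" for x
    proof -
      have "norm (mpow A N *v x) < norm x" by (rule contr[OF \<open>A \<in> U\<close> that])
      then have "(norm (mpow A N *v x))^2 < (norm x)^2"
        by (intro power_strict_mono) auto
      then show ?thesis by (simp add: PN_lyap)
    qed
    ultimately show ?thesis unfolding pos_def_def by auto
  qed
  show ?thesis
    by (rule exI[of _ "PN N"]) (use PN_sos pd1 pd2 in auto)
qed



definition idx :: "'n::finite \<Rightarrow> nat" where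
  "idx = (SOME f. bij_betw f (UNIV::'n set) {..<CARD('n)})"

lemma idx_bij: "bij_betw (idx :: 'n::finite \<Rightarrow> nat) UNIV {..<CARD('n)}"
proof -
  have "\<exists>f. bij_betw f (UNIV::'n set) {..<CARD('n)}"
    using ex_bij_betw_finite_nat[of "UNIV::'n set"] by (simp add: atLeast0LessThan)
  then show ?thesis unfolding idx_def by (rule someI_ex)
qed

definition fi :: "nat \<Rightarrow> 'n::finite" where "fi = inv_into UNIV idx"

lemma fi_bij: "bij_betw (fi :: nat \<Rightarrow> 'n::finite) {..<CARD('n)} UNIV"
  unfolding fi_def using bij_betw_inv_into[OF idx_bij] by simp

lemma fi_idx[simp]: "fi (idx i) = i"
  unfolding fi_def using idx_bij bij_betw_imp_inj_on by (metis inv_into_f_f UNIV_I)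

lemma idx_fi[simp]: "j < CARD('n) \<Longrightarrow> idx (fi j :: 'n::finite) = j"
  unfolding fi_def using idx_bij[where 'n='n] by (metis bij_betw_imp_surj_on f_inv_into_f lessThan_iff)

lemma idx_lt[simp]: "idx (i::'n::finite) < CARD('n)"
  using idx_bij[where 'n='n] by (auto simp: bij_betw_def)

lemma sum_fi: "(\<Sum>l\<in>{0..<CARD('n)}. g (fi l :: 'n::finite)) = (\<Sum>a\<in>UNIV. g a)"
  using sum.reindex_bij_betw[OF fi_bij, of g] by (simp add: atLeast0LessThan)

definition jc :: "complex^'n^'n \<Rightarrow> complex mat" where
  "jc X = Matrix.mat CARD('n) CARD('n) (\<lambda>(i,j). X $ fi i $ fi j)"

definition jv :: "complex^'n \<Rightarrow> complex Matrix.vec" where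
  "jv v = Matrix.vec CARD('n) (\<lambda>i. v $ fi i)"

lemma jc_carrier[simp]: "jc (X :: complex^'n^'n) \<in> carrier_mat CARD('n) CARD('n)"
  by (simp add: jc_def)

lemma jc_dims[simp]: "dim_row (jc (X :: complex^'n^'n)) = CARD('n)" "dim_col (jc X) = CARD('n)"
  by (simp_all add: jc_def)

lemma jc_index[simp]: "i < CARD('n) \<Longrightarrow> j < CARD('n) \<Longrightarrow> jc (X :: complex^'n^'n) $$ (i,j) = X $ fi i $ fi j"
  by (simp add: jc_def)

lemma jv_dim[simp]: "dim_vec (jv (v :: complex^'n)) = CARD('n)"
  by (simp add: jv_def)

lemma jv_index[simp]: "i < CARD('n) \<Longrightarrow> vec_index (jv (v :: complex^'n)) i = v $ fi i"
  by (simp add: jv_def)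

lemma jc_mult: "jc (X ** Y) = jc X * jc (Y :: complex^'n^'n)"
proof (rule eq_matI)
  fix i j assume ij: "i < dim_row (jc X * jc Y)" "j < dim_col (jc X * jc Y)"
  then have ij': "i < CARD('n)" "j < CARD('n)" by auto
  have "(jc X * jc Y) $$ (i,j) = (\<Sum>l\<in>{0..<CARD('n)}. X $ fi i $ fi l * Y $ fi l $ fi j)"
    using ij' by (simp add: scalar_prod_def)
  also have "\<dots> = (\<Sum>a\<in>UNIV. X $ fi i $ a * Y $ a $ fi j)"
    by (rule sum_fi)
  also have "\<dots> = jc (X ** Y) $$ (i,j)"
    using ij' by (simp add: matrix_matrix_mult_def)
  finally show "jc (X ** Y) $$ (i,j) = (jc X * jc Y) $$ (i,j)" by simp
qed auto

lemma jc_one: "jc (Finite_Cartesian_Product.mat 1 :: complex^'n^'n) = 1\<^sub>m CARD('n)"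
proof (rule eq_matI)
  fix i j assume ij: "i < dim_row (1\<^sub>m CARD('n))" "j < dim_col (1\<^sub>m CARD('n))"
  then have ij': "i < CARD('n)" "j < CARD('n)" by auto
  have "(fi i :: 'n) = fi j \<longleftrightarrow> i = j"
    using ij' by (metis idx_fi)
  then show "jc (Finite_Cartesian_Product.mat 1 :: complex^'n^'n) $$ (i,j) = 1\<^sub>m CARD('n) $$ (i,j)"
    using ij' by (simp add: Finite_Cartesian_Product.mat_def)
qed auto

lemma jc_mult_vec: "jc X *\<^sub>v jv v = jv (X *v (v :: complex^'n))"
proof (rule eq_vecI)
  fix i assume "i < dim_vec (jv (X *v v))"
  then have i: "i < CARD('n)" by simp
  have "vec_index (jc X *\<^sub>v jv v) i = (\<Sum>l\<in>{0..<CARD('n)}. X $ fi i $ fi l * v $ fi l)"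
    using i by (simp add: scalar_prod_def)
  also have "\<dots> = (\<Sum>a\<in>UNIV. X $ fi i $ a * v $ a)"
    by (rule sum_fi)
  also have "\<dots> = vec_index (jv (X *v v)) i"
    using i by (simp add: matrix_vector_mult_def)
  finally show "vec_index (jc X *\<^sub>v jv v) i = vec_index (jv (X *v v)) i" .
qed simp

lemma jv_inj: "jv v = jv w \<Longrightarrow> v = (w :: complex^'n)"
proof -
  assume h: "jv v = jv w"
  have "v $ a = w $ a" for a
    using arg_cong[OF h, of "\<lambda>u. vec_index u (idx a)"] by simp
  then show ?thesis by (simp add: Finite_Cartesian_Product.vec_eq_iff)
qed

lemma jv_zero: "jv (0 :: complex^'n) = 0\<^sub>v CARD('n)"
  by (rule eq_vecI) auto

lemma jv_smult: "jv (l *s (v :: complex^'n)) = l \<cdot>\<^sub>v jv v"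
  by (rule eq_vecI) auto

lemma jv_surj: "w \<in> carrier_vec CARD('n) \<Longrightarrow> jv (\<chi> a. vec_index w (idx a) :: complex^'n) = w"
  by (rule eq_vecI) auto

lemma eig_corr: "(\<exists>v. v \<noteq> 0 \<and> X *v v = l *s v) \<longleftrightarrow> eigenvalue (jc (X :: complex^'n^'n)) l"
proof
  assume "\<exists>v. v \<noteq> 0 \<and> X *v v = l *s v"
  then obtain v where v: "v \<noteq> 0" "X *v v = l *s v" by blast
  have "jv v \<noteq> 0\<^sub>v CARD('n)" using v(1) jv_inj jv_zero by metis
  moreover have "jc X *\<^sub>v jv v = l \<cdot>\<^sub>v jv v" by (simp add: jc_mult_vec v(2) jv_smult)
  ultimately show "eigenvalue (jc X) l"
    unfolding eigenvalue_def eigenvector_def by (intro exI[of _ "jv v"]) (simp add: jv_def)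
next
  assume "eigenvalue (jc X) l"
  then obtain w where w: "w \<in> carrier_vec CARD('n)" "w \<noteq> 0\<^sub>v CARD('n)" "jc X *\<^sub>v w = l \<cdot>\<^sub>v w"
    unfolding eigenvalue_def eigenvector_def by auto
  define v where "v = (\<chi> a. vec_index w (idx a) :: complex^'n)"
  have wv: "jv v = w" unfolding v_def by (rule jv_surj[OF w(1)])
  have "v \<noteq> 0" using w(2) wv jv_zero by metis
  moreover have "jv (X *v v) = jv (l *s v)"
    using w(3) wv by (simp add: jc_mult_vec[symmetric] jv_smult)
  ultimately show "\<exists>v. v \<noteq> 0 \<and> X *v v = l *s v" using jv_inj by blast
qed



definition jm :: "real^'n^'n \<Rightarrow> complex mat" where "jm A = jc (cmat A)"

lemma jm_carrier: "jm (A :: real^'n^'n) \<in> carrier_mat CARD('n) CARD('n)"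
  unfolding jm_def by simp

lemma ceig_spec: "{l. c_eigenvalue A l} = spectrum (jm A)"
  unfolding spectrum_def c_eigenvalue_def jm_def using eig_corr[of "cmat A"] by auto

lemma eig_fin: "finite {l. c_eigenvalue (A :: real^'n^'n) l}"
  unfolding ceig_spec using card_finite_spectrum(1)[OF jm_carrier] .

lemma eig_ne: "{l. c_eigenvalue (A :: real^'n^'n) l} \<noteq> {}"
  unfolding ceig_spec using spectrum_non_empty[OF jm_carrier] by simp

lemma stable_iff: "stable (A :: real^'n^'n) \<longleftrightarrow> (\<forall>l. c_eigenvalue A l \<longrightarrow> cmod l < 1)"
proof -
  have e: "{cmod l | l. c_eigenvalue A l} = cmod ` {l. c_eigenvalue A l}" by auto
  show ?thesis
    unfolding stable_def spec_rad_def e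
    using eig_fin[of A] eig_ne[of A] by (subst Max_less_iff) auto
qed

lemma cmat_mult: "cmat (A ** B) = cmat A ** cmat (B :: real^'n^'n)"
  by (simp add: cmat_def matrix_matrix_mult_def Finite_Cartesian_Product.vec_eq_iff)

lemma cmat_one: "cmat (Finite_Cartesian_Product.mat 1 :: real^'n^'n) = Finite_Cartesian_Product.mat 1"
  by (simp add: cmat_def Finite_Cartesian_Product.mat_def Finite_Cartesian_Product.vec_eq_iff)

lemma jm_pow: "jm A ^\<^sub>m k = jc (cmat (mpow (A :: real^'n^'n) k))"
proof (induction k)
  case 0
  then show ?case by (simp add: jm_def cmat_one jc_one)
next
  case (Suc k)
  then show ?case by (simp add: cmat_mult jc_mult jm_def)
qed

lemma bounded_pow:
  assumes "\<forall>l. c_eigenvalue (A :: real^'n^'n) l \<longrightarrow> cmod l < 1"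
  shows "\<exists>c. \<forall>k i j. \<bar>mpow A k $ i $ j\<bar> \<le> c"
proof -
  have n: "CARD('n) > 0" by simp
  from spectral_radius_mem_max(1)[OF jm_carrier n, of A]
  obtain l where l: "l \<in> spectrum (jm A)" "spectral_radius (jm A) = norm l" by auto
  have "c_eigenvalue A l" using l(1) ceig_spec by blast
  with assms l(2) have sr: "spectral_radius (jm A) < 1" by simp
  from spectral_radius_jnf_norm_bound_less_1_upper_triangular[OF jm_carrier sr]
  obtain c where c: "\<And>k. norm_bound (jm A ^\<^sub>m k) c" by blast
  have "\<bar>mpow A k $ i $ j\<bar> \<le> c" for k i j
  proof -
    have "norm ((jm A ^\<^sub>m k) $$ (idx i, idx j)) \<le> c"
      using c[of k] jm_carrier[of A] unfolding norm_bound_def by auto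
    moreover have "(jm A ^\<^sub>m k) $$ (idx i, idx j) = complex_of_real (mpow A k $ i $ j)"
      by (simp add: jm_pow cmat_def)
    ultimately show ?thesis by simp
  qed
  then show ?thesis by blast
qed

lemma scale_eig:
  assumes "c_eigenvalue ((1/r) *\<^sub>R A) l" "r \<noteq> 0"
  shows "c_eigenvalue A (complex_of_real r * l)"
proof -
  obtain v where v: "v \<noteq> 0" "cmat ((1/r) *\<^sub>R A) *v v = l *s v"
    using assms(1) unfolding c_eigenvalue_def by blast
  have h: "cmat ((1/r) *\<^sub>R A) *v v = complex_of_real (1/r) *s (cmat A *v v)"
    by (simp add: cmat_def matrix_vector_mult_def Finite_Cartesian_Product.vec_eq_iff
        sum_distrib_left mult_ac)
  have "cmat A *v v = complex_of_real r *s (complex_of_real (1/r) *s (cmat A *v v))"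
    using assms(2) by (simp add: vector_smult_assoc)
  also have "\<dots> = (complex_of_real r * l) *s v"
    using v(2) h by (simp add: vector_smult_assoc)
  finally show ?thesis unfolding c_eigenvalue_def using v(1) by blast
qed

lemma scaleR_mm: "(a *\<^sub>R M) ** (b *\<^sub>R N) = (a*b) *\<^sub>R (M ** (N :: real^'n^'n))"
  by (simp add: matrix_matrix_mult_def Finite_Cartesian_Product.vec_eq_iff sum_distrib_left mult_ac)

lemma mpow_scale: "mpow (c *\<^sub>R A) k = c^k *\<^sub>R mpow A k"
proof (induction k)
  case 0
  then show ?case by simp
next
  case (Suc k)
  then show ?case by (simp add: scaleR_mm mult_ac)
qed

lemma decay:
  assumes "stable (A :: real^'n^'n)"
  shows "\<exists>k>0. ssum k A < 1"
proof -
  define E where "E = {l. c_eigenvalue A l}"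
  have all: "\<forall>l\<in>E. cmod l < 1" using assms stable_iff E_def by blast
  have fin: "finite (cmod ` E)" and ne: "cmod ` E \<noteq> {}"
    using eig_fin[of A] eig_ne[of A] E_def by auto
  define \<rho> where "\<rho> = Max (cmod ` E)"
  have \<rho>1: "\<rho> < 1" unfolding \<rho>_def using fin ne all by (subst Max_less_iff) auto
  have le: "cmod l \<le> \<rho>" if "l \<in> E" for l
    unfolding \<rho>_def using fin that by (intro Max_ge) auto
  define r where "r = (1 + max 0 \<rho>) / 2"
  have r: "0 < r" "r < 1" "\<rho> < r" using \<rho>1 unfolding r_def by auto
  define B where "B = (1/r) *\<^sub>R A"
  have "\<forall>l. c_eigenvalue B l \<longrightarrow> cmod l < 1"
  proof (intro allI impI)
    fix l assume "c_eigenvalue B l"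
    then have "complex_of_real r * l \<in> E"
      unfolding E_def B_def using scale_eig r(1) by auto
    then have "cmod (complex_of_real r * l) \<le> \<rho>" by (rule le)
    then have "r * cmod l \<le> \<rho>" using r by (simp add: norm_mult)
    then have "r * cmod l < r * 1" using r by linarith
    then show "cmod l < 1" using r(1) by (simp only: mult_less_cancel_left_pos)
  qed
  from bounded_pow[OF this] obtain c where c: "\<And>k i j. \<bar>mpow B k $ i $ j\<bar> \<le> c" by blast
  have AB: "A = r *\<^sub>R B" using r(1) by (simp add: B_def)
  have bound: "ssum k A \<le> real CARD('n) * (real CARD('n) * (r^k * c))" for k
  proof -
    have "\<bar>mpow A k $ i $ j\<bar> \<le> r^k * c" for i j
      using c[of k i j] r(1) by (simp add: AB mpow_scale abs_mult mult_left_mono)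
    then show ?thesis unfolding ssum_def
      by (intro sum_bounded_above[THEN order_trans] mult_left_mono) auto
  qed
  have "(\<lambda>k. real CARD('n) * (real CARD('n) * (r^k * c))) \<longlonglongrightarrow> 0"
    by (intro tendsto_mult_right_zero tendsto_mult_left_zero LIMSEQ_power_zero) (use r in auto)
  from order_tendstoD(2)[OF this, of 1]
  obtain K where K: "\<And>k. k \<ge> K \<Longrightarrow> real CARD('n) * (real CARD('n) * (r^k * c)) < 1"
    by (auto simp: eventually_sequentially)
  show ?thesis
    using bound[of "Suc K"] K[of "Suc K"] by (intro exI[of _ "Suc K"]) auto
qed



lemma lyap_eig:
  fixes A P :: "real^'n^'n"
  assumes P: "pos_def P" and Q: "pos_def (P - transpose A ** P ** A)" and e: "c_eigenvalue A l"
  shows "cmod l < 1"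
proof -
  obtain v where v: "v \<noteq> 0" "cmat A *v v = l *s v"
    using e unfolding c_eigenvalue_def by blast
  define x where "x = (\<chi> i. Re (v $ i))"
  define y where "y = (\<chi> i. Im (v $ i))"
  define a where "a = Re l"
  define b where "b = Im l"
  have ci: "(\<Sum>j\<in>UNIV. complex_of_real (A $ i $ j) * v $ j) = l * v $ i" for i
    using arg_cong[OF v(2), of "\<lambda>w. w $ i"] by (simp add: cmat_def matrix_vector_mult_def)
  have Ax: "A *v x = a *\<^sub>R x - b *\<^sub>R y"
  proof -
    have "(\<Sum>j\<in>UNIV. A $ i $ j * Re (v $ j)) = a * Re (v $ i) - b * Im (v $ i)" for i
      using arg_cong[OF ci[of i], of Re] by (simp add: Re_sum a_def b_def)
    then show ?thesis
      by (simp add: Finite_Cartesian_Product.vec_eq_iff matrix_vector_mult_def x_def y_def)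
  qed
  have Ay: "A *v y = b *\<^sub>R x + a *\<^sub>R y"
  proof -
    have "(\<Sum>j\<in>UNIV. A $ i $ j * Im (v $ j)) = b * Re (v $ i) + a * Im (v $ i)" for i
      using arg_cong[OF ci[of i], of Im] by (simp add: Im_sum a_def b_def)
    then show ?thesis
      by (simp add: Finite_Cartesian_Product.vec_eq_iff matrix_vector_mult_def x_def y_def)
  qed
  have xy: "x \<noteq> 0 \<or> y \<noteq> 0"
  proof (rule ccontr)
    assume "\<not> (x \<noteq> 0 \<or> y \<noteq> 0)"
    then have x0: "x = 0" and y0: "y = 0" by auto
    have "v $ i = 0" for i
    proof -
      have "x $ i = 0" "y $ i = 0" using x0 y0 by auto
      then show ?thesis by (simp add: x_def y_def complex_eq_iff)
    qed
    then have "v = 0" by (simp add: Finite_Cartesian_Product.vec_eq_iff)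
    with v(1) show False by simp
  qed
  have Psym: "transpose P = P" using P unfolding pos_def_def by simp
  have sym: "inner u (P *v w) = inner w (P *v u)" for u w
  proof -
    have "inner u (P *v w) = inner u (transpose P *v w)" using Psym by simp
    also have "\<dots> = inner (P *v u) w" by simp
    also have "\<dots> = inner w (P *v u)" by (rule inner_commute)
    finally show ?thesis .
  qed
  define q where "q u = inner u (P *v u)" for u
  have qnn: "0 \<le> q u" for u
    using P unfolding pos_def_def q_def by (cases "u = 0") (auto intro: less_imp_le)
  have qpos: "0 < q x + q y"
    using xy P qnn unfolding pos_def_def q_def by (metis add_pos_nonneg add_nonneg_pos)
  have Qq: "inner u ((P - transpose A ** P ** A) *v u) = q u - q (A *v u)" for u
    unfolding q_def
    by (simp add: matrix_vector_mult_diff_rdistrib inner_diff_right matrix_vector_mul_assoc[symmetric])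
  have Qpos: "0 < q x - q (A *v x) + (q y - q (A *v y))"
  proof -
    have "0 \<le> inner u ((P - transpose A ** P ** A) *v u)" for u
      using Q unfolding pos_def_def by (cases "u = 0") (auto intro: less_imp_le)
    then show ?thesis using xy Q unfolding pos_def_def Qq
      by (metis add_pos_nonneg add_nonneg_pos)
  qed
  have key: "q (A *v x) + q (A *v y) = (a^2 + b^2) * (q x + q y)"
    unfolding Ax Ay q_def
    by (simp add: matrix_vector_mult_diff_distrib matrix_vector_right_distrib
        matrix_vector_mult_scaleR inner_diff_left inner_diff_right inner_add_left inner_add_right
        sym[of y x] algebra_simps power2_eq_square)
  have "(1 - (a^2 + b^2)) * (q x + q y) > 0"
    using Qpos key by (simp add: algebra_simps)
  with qpos have "a^2 + b^2 < 1"
    by (simp add: zero_less_mult_iff)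
  then have "(cmod l)^2 < 1" by (simp add: cmod_power2 a_def b_def)
  then show ?thesis using abs_square_less_1[of "cmod l"] by simp
qed

theorem lemma22:
  fixes U :: "(real^'n^'n) set"
  assumes "compact U"
  shows "(\<forall>A\<in>U. stable A) \<longleftrightarrow>
         (\<exists>P :: real^'n^'n \<Rightarrow> real^'n^'n. sos_matrix P \<and>
              (\<forall>A\<in>U. pos_def (P A)) \<and>
              (\<forall>A\<in>U. pos_def (P A - transpose A ** P A ** A)))"
proof
  assume "\<forall>A\<in>U. stable A"
  then have "\<forall>A\<in>U. \<exists>k>0. ssum k A < 1" using decay by blast
  then show "\<exists>P :: real^'n^'n \<Rightarrow> real^'n^'n. sos_matrix P \<and>
              (\<forall>A\<in>U. pos_def (P A)) \<and>
              (\<forall>A\<in>U. pos_def (P A - transpose A ** P A ** A))"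
    by (rule forward_from_decay[OF assms])
next
  assume "\<exists>P :: real^'n^'n \<Rightarrow> real^'n^'n. sos_matrix P \<and>
              (\<forall>A\<in>U. pos_def (P A)) \<and>
              (\<forall>A\<in>U. pos_def (P A - transpose A ** P A ** A))"
  then obtain P :: "real^'n^'n \<Rightarrow> real^'n^'n" where
    P: "\<forall>A\<in>U. pos_def (P A)" "\<forall>A\<in>U. pos_def (P A - transpose A ** P A ** A)" by blast
  show "\<forall>A\<in>U. stable A"
    using P lyap_eig stable_iff by blast
qed

end
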